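(* For every integer $n\ge1$ there exist three real polynomials $a_1(X)$, $a_2(X)$ and $b(X)$ of degree $n$ such that (i) all the roots of $a_1$, $a_2$, $b$ and $a_1b+a_2$ are real, and (ii) all the roots of $a_2$ and of $a_1b+a_2$ are smaller than all the roots of $b$. *)

theory Defs
  imports "HOL-Computational_Algebra.Polynomial"
begin

text \<open>A real polynomial has all its roots real: every complex root of it
(viewed as a complex polynomial) is real. The zero polynomial does not
qualify, since every complex number is a root of it.\<close>
definition all_roots_real :: "real poly \<Rightarrow> bool" where
  "all_roots_real p \<longleftrightarrow>
     (\<forall>z::complex. poly (map_poly complex_of_real p) z = 0 \<longrightarrow> z \<in> \<real>)"

end

theory Submission
  imports Defs
begin
lemma roots_real_card:
  fixes p :: "real poly" and S :: "real set"
  assumes p0: "p \<noteq> 0" and fin: "finite S" and roots: "\<forall>x\<in>S. poly p x = 0"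
    and cardS: "card S \<ge> degree p"
  shows "all_roots_real p"
  unfolding all_roots_real_def
proof (intro allI impI, rule ccontr)
  fix z assume z: "poly (map_poly complex_of_real p) z = 0" "z \<notin> \<real>"
  let ?q = "map_poly complex_of_real p"
  have q0: "?q \<noteq> 0" using p0 by (auto simp: poly_eq_iff coeff_map_poly)
  have deg: "degree ?q = degree p" by (simp add: degree_map_poly)
  have ev: "\<And>x. poly ?q (of_real x) = of_real (poly p x)"
    by (induction p) (auto simp: map_poly_pCons)
  have sub: "insert z (of_real ` S) \<subseteq> {x. poly ?q x = 0}"
    using z roots ev by auto
  have finr: "finite {x. poly ?q x = 0}" using q0 by (rule poly_roots_finite)
  have "z \<notin> of_real ` S" using z(2) by auto
  hence c1: "card (insert z (of_real ` S)) = Suc (card S)"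
    using fin by (simp add: card_image inj_on_def)
  have c2: "card (insert z (of_real ` S)) \<le> card {x. poly ?q x = 0}"
    using sub finr by (rule card_mono[rotated])
  have c3: "card {x. poly ?q x = 0} \<le> degree ?q" using q0 by (rule card_poly_roots_bound)
  show False using c1 c2 c3 deg cardS by simp
qed

lemma prod_sign:
  fixes g :: "'a \<Rightarrow> real"
  assumes "finite I" "\<forall>i\<in>I. g i \<noteq> 0"
  shows "prod g I = (-1)^(card {i\<in>I. g i < 0}) * prod (\<lambda>i. \<bar>g i\<bar>) I"
  using assms
proof (induction I rule: finite_induct)
  case empty
  then show ?case by simp
next
  case (insert x F)
  have fin: "finite {i\<in>F. g i < 0}" using insert by simp
  show ?case
  proof (cases "g x < 0")
    case True
    hence "{i\<in>insert x F. g i < 0} = insert x {i\<in>F. g i < 0}" by auto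
    hence "card {i\<in>insert x F. g i < 0} = Suc (card {i\<in>F. g i < 0})"
      using insert fin by simp
    then show ?thesis using insert True by simp
  next
    case False
    hence "{i\<in>insert x F. g i < 0} = {i\<in>F. g i < 0}" by auto
    then show ?thesis using insert False by simp
  qed
qed


theorem corollary5p2:
  fixes n :: nat
  assumes "n \<ge> 1"
  shows "\<exists>a1 a2 b :: real poly.
           degree a1 = n \<and> degree a2 = n \<and> degree b = n \<and>
           all_roots_real a1 \<and> all_roots_real a2 \<and> all_roots_real b \<and>
           all_roots_real (a1 * b + a2) \<and>
           (\<forall>x y. (poly a2 x = 0 \<or> poly (a1 * b + a2) x = 0) \<longrightarrow>
                  poly b y = 0 \<longrightarrow> x < y)"
proof -
  obtain n' where n: "n = Suc n'" using assms by (cases n) auto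
  define N :: real where "N = real n + 1"
  define \<alpha> :: real where "\<alpha> = (4*N)^(2*n)"
  define R :: real where "R = 4^n * \<alpha>"
  define c :: real where "c = \<alpha> * R^n'"
  define a1 :: "real poly" where "a1 = [:0,1:] * (\<Prod>k<n'. [:(real k + 1)*R, 1:])"
  define a2 :: "real poly" where "a2 = smult c (\<Prod>i\<in>{1..n}. [:real i, 1:])"
  define b :: "real poly" where "b = monom 1 n"
  define P where "P = a1 * b + a2"
  have N1: "N \<ge> 2" using n by (simp add: N_def)
  have \<alpha>eq: "\<alpha> = 16^n * N^(2*n)"
    by (simp add: \<alpha>_def power_mult_distrib power_mult)
  have \<alpha>N: "\<alpha> \<ge> 16 * N"
  proof -
    have "N^1 \<le> N^(2*n)" using N1 n by (intro power_increasing) auto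
    moreover have "(16::real)^1 \<le> 16^n" using n by (intro power_increasing) auto
    ultimately have "16^1 * N^1 \<le> 16^n * N^(2*n)" using N1 by (intro mult_mono) auto
    thus ?thesis unfolding \<alpha>eq by simp
  qed
  have Rpos: "R > 0" using \<alpha>N N1 by (simp add: R_def)
  have RN: "R \<ge> 64 * N"
  proof -
    have "(4::real)^1 \<le> 4^n" using n by (intro power_increasing) auto
    hence "4 * (16 * N) \<le> 4^n * \<alpha>" using \<alpha>N N1 by (intro mult_mono) auto
    thus ?thesis by (simp add: R_def)
  qed
  have c0: "c > 0" using \<alpha>N N1 Rpos by (simp add: c_def)
  have pa1: "\<And>x. poly a1 x = x * (\<Prod>k<n'. (real k + 1)*R + x)"
    by (simp add: a1_def poly_prod)
  have pa2: "\<And>x. poly a2 x = c * (\<Prod>i\<in>{1..n}. real i + x)"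
    by (simp add: a2_def poly_prod)
  have pb: "\<And>x. poly b x = x^n"
    by (simp add: b_def poly_monom)
  have da1: "degree a1 = n"
  proof -
    have "degree (\<Prod>k<n'. [:(real k + 1)*R, 1:]) = (\<Sum>k<n'. degree [:(real k + 1)*R, 1:])"
      by (rule degree_prod_sum_eq) auto
    hence "degree (\<Prod>k<n'. [:(real k + 1)*R, 1:]) = n'" by simp
    moreover have "(\<Prod>k<n'. [:(real k + 1)*R, 1:]) \<noteq> 0" by (simp add: prod_zero_iff)
    ultimately show ?thesis unfolding a1_def n by (subst degree_mult_eq) auto
  qed
  have da2: "degree a2 = n"
  proof -
    have "degree (\<Prod>i\<in>{1..n}. [:real i, 1:]) = (\<Sum>i\<in>{1..n}. degree [:real i, 1:])"
      by (rule degree_prod_sum_eq) auto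
    thus ?thesis using c0 by (simp add: a2_def)
  qed
  have db: "degree b = n" by (simp add: b_def degree_monom_eq)
  have a10: "a1 \<noteq> 0" using da1 n by auto
  have b0: "b \<noteq> 0" using db n by auto
  have dP: "degree P = 2*n"
  proof -
    have "degree (a1*b) = 2*n" using a10 b0 da1 db by (simp add: degree_mult_eq)
    thus ?thesis unfolding P_def using da2 n by (subst degree_add_eq_left) auto
  qed
  have Pform: "\<And>y. poly P (-y) = (-y) * (\<Prod>k<n'. (real k + 1)*R - y) * (-y)^n
                          + c * (\<Prod>i\<in>{1..n}. real i - y)"
    by (simp add: P_def pa1 pa2 pb)
  have posP: "\<And>x. x \<ge> 0 \<Longrightarrow> poly P x > 0"
  proof -
    fix x :: real assume x: "x \<ge> 0"
    have "poly a1 x \<ge> 0" unfolding pa1 using x Rpos by (intro mult_nonneg_nonneg prod_nonneg) auto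
    moreover have "poly a2 x > 0" unfolding pa2 using x c0 by (intro mult_pos_pos prod_pos) auto
    ultimately show "poly P x > 0" using x by (simp add: P_def pb add_nonneg_pos)
  qed
  define w where "w m = (if m \<le> n then real m + 1/2 else (real m - real n - 1/2) * R)" for m
  have wmono: "w m \<le> w m'" if "m \<le> m'" for m m'
  proof (cases "m' \<le> n")
    case True thus ?thesis using that by (simp add: w_def)
  next
    case False
    hence ge: "real m' - real n - 1/2 \<ge> 1/2" by simp
    show ?thesis
    proof (cases "m \<le> n")
      case True
      have "w m \<le> N" using True by (simp add: w_def N_def)
      also have "N \<le> 1/2 * R" using RN N1 by simp
      also have "\<dots> \<le> (real m' - real n - 1/2) * R" using ge Rpos by (intro mult_right_mono) auto
      finally show ?thesis using False by (simp add: w_def)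
    next
      case False
      thus ?thesis using \<open>\<not> m' \<le> n\<close> that Rpos by (simp add: w_def mult_right_mono)
    qed
  qed
  have wstrict: "w m < w (Suc m)" for m
  proof (cases "Suc m \<le> n")
    case True thus ?thesis by (simp add: w_def)
  next
    case False
    show ?thesis
    proof (cases "m \<le> n")
      case True
      hence "m = n" using False by simp
      have "w m \<le> N" using True by (simp add: w_def N_def)
      also have "N < 1/2 * R" using RN N1 by simp
      finally show ?thesis using \<open>m = n\<close> by (simp add: w_def)
    next
      case False
      thus ?thesis using Rpos by (simp add: w_def algebra_simps)
    qed
  qed
  have key: "(-1)^m * poly P (- w m) > 0" if m: "m \<le> 2*n" for m
  proof (cases "m \<le> n")
    case True
    define y where "y = real m + 1/2"
    have wm: "w m = y" using True by (simp add: w_def y_def)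
    have y0: "y > 0" and yN: "y \<le> N" using True by (auto simp: y_def N_def)
    have RgeN: "N \<le> R" using RN N1 by simp
    define E where "E = (\<Prod>i\<in>{1..n}. real i - y)"
    have negset: "{i\<in>{1..n}. real i - y < 0} = {1..m}"
      using True by (auto simp: y_def)
    have habs: "\<bar>real i - y\<bar> \<ge> 1/2" for i :: nat
    proof (cases "i \<le> m")
      case True thus ?thesis by (simp add: y_def)
    next
      case False hence "real i \<ge> real m + 1" by simp
      thus ?thesis by (simp add: y_def)
    qed
    have nz: "\<forall>i\<in>{1..n}. real i - y \<noteq> 0"
    proof
      fix i assume "i \<in> {1..n}"
      show "real i - y \<noteq> 0" using habs[of i] by auto
    qed
    have E: "E = (-1)^m * (\<Prod>i\<in>{1..n}. \<bar>real i - y\<bar>)"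
      unfolding E_def
      by (subst prod_sign) (use nz negset in auto)
    have Eabs: "(\<Prod>i\<in>{1..n}. \<bar>real i - y\<bar>) \<ge> (1/2)^n"
    proof -
      have "(\<Prod>i\<in>{1..n}. (1/2::real)) \<le> (\<Prod>i\<in>{1..n}. \<bar>real i - y\<bar>)"
        using habs by (intro prod_mono) auto
      thus ?thesis by simp
    qed
    define T where "T = (-y) * (\<Prod>k<n'. (real k + 1)*R - y) * (-y)^n"
    have Pm: "poly P (- w m) = T + c * E" unfolding wm T_def E_def by (rule Pform)
    have Tabs: "\<bar>T\<bar> \<le> N^(2*n) * R^n'"
    proof -
      have fac: "\<bar>(real k + 1)*R - y\<bar> \<le> N * R" if "k < n'" for k
      proof -
        have "y \<le> R" using yN RgeN by simp
        also have "R \<le> (real k + 1) * R" using Rpos by simp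
        finally have "\<bar>(real k + 1)*R - y\<bar> = (real k + 1)*R - y" by simp
        also have "\<dots> \<le> (real k + 1) * R" using y0 by simp
        also have "\<dots> \<le> N * R" using that Rpos n by (intro mult_right_mono) (auto simp: N_def)
        finally show ?thesis .
      qed
      have "\<bar>\<Prod>k<n'. (real k + 1)*R - y\<bar> \<le> (\<Prod>k<n'. N * R)"
        unfolding abs_prod using fac by (intro prod_mono) auto
      hence pr: "\<bar>\<Prod>k<n'. (real k + 1)*R - y\<bar> \<le> (N*R)^n'" by simp
      have "\<bar>T\<bar> = y * \<bar>\<Prod>k<n'. (real k + 1)*R - y\<bar> * y^n"
        using y0 by (simp add: T_def abs_mult power_abs)
      also have "\<dots> \<le> N * (N*R)^n' * N^n"
        using y0 yN pr by (intro mult_mono power_mono) auto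
      also have "\<dots> = N^(1+n'+n) * R^n'"
        by (simp add: power_add power_mult_distrib)
      also have "1+n'+n = 2*n" by (simp add: n)
      finally show ?thesis .
    qed
    have cbig: "c * (1/2)^n = 8^n * (N^(2*n) * R^n')"
    proof -
      have "c * (1/2)^n = (16^n * (1/2)^n) * (N^(2*n) * R^n')"
        by (simp add: c_def \<alpha>eq algebra_simps)
      also have "16^n * (1/2::real)^n = 8^n" by (simp flip: power_mult_distrib)
      finally show ?thesis .
    qed
    have pos: "N^(2*n) * R^n' > 0" using N1 Rpos by simp
    have g8: "(8::real)^n > 1" using n by (intro one_less_power) auto
    have "1 * (N^(2*n) * R^n') < 8^n * (N^(2*n) * R^n')"
      by (rule mult_strict_right_mono[OF g8 pos])
    hence "c * (1/2)^n > N^(2*n) * R^n'" unfolding cbig by simp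
    hence "c * (\<Prod>i\<in>{1..n}. \<bar>real i - y\<bar>) > \<bar>T\<bar>"
      using mult_left_mono[OF Eabs, of c] Tabs c0 by linarith
    moreover have "(-1)^m * poly P (- w m) = (-1)^m * T + c * (\<Prod>i\<in>{1..n}. \<bar>real i - y\<bar>)"
      by (simp add: Pm E algebra_simps)
    moreover have "(-1)^m * T \<ge> - \<bar>T\<bar>"
      by (cases "even m") auto
    ultimately show ?thesis by linarith
  next
    case False
    define i where "i = m - n"
    have i1: "1 \<le> i" and in': "i \<le> n" using False m by (auto simp: i_def)
    define y where "y = (real i - 1/2) * R"
    have wm: "w m = y" using False by (simp add: w_def y_def i_def of_nat_diff)
    have yR: "y \<ge> R/2" using i1 Rpos by (simp add: y_def algebra_simps) 
    have yn: "y > real n" using yR RN N1 by (simp add: N_def)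
    define Pi where "Pi = (\<Prod>k<n'. (real k + 1)*R - y)"
    have negset: "{k\<in>{..<n'}. (real k + 1)*R - y < 0} = {..<i-1}"
    proof -
      have iff: "(real k + 1)*R - y < 0 \<longleftrightarrow> k < i - 1" for k
      proof -
        have "(real k + 1)*R - y < 0 \<longleftrightarrow> (real k + 1) < real i - 1/2"
          using Rpos by (simp add: y_def)
        also have "\<dots> \<longleftrightarrow> k < i - 1" using i1 by linarith
        finally show ?thesis .
      qed
      show ?thesis
      proof (intro set_eqI iffI)
        fix k assume "k \<in> {k\<in>{..<n'}. (real k + 1)*R - y < 0}"
        thus "k \<in> {..<i-1}" using iff[of k] by simp
      next
        fix k assume "k \<in> {..<i-1}"
        thus "k \<in> {k\<in>{..<n'}. (real k + 1)*R - y < 0}" using iff[of k] in' n by simp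
      qed
    qed
    have habs: "\<bar>(real k + 1)*R - y\<bar> \<ge> R/2" for k :: nat
    proof -
      have eq: "(real k + 1)*R - y = (real k + 3/2 - real i) * R" by (simp add: y_def algebra_simps)
      have "\<bar>real k + 3/2 - real i\<bar> \<ge> 1/2"
      proof (cases "k + 1 < i")
        case True thus ?thesis by linarith
      next
        case False thus ?thesis by linarith
      qed
      hence "\<bar>real k + 3/2 - real i\<bar> * R \<ge> 1/2 * R" using Rpos by (intro mult_right_mono) auto
      thus ?thesis unfolding eq abs_mult using Rpos by simp
    qed
    have Pi: "Pi = (-1)^(i-1) * (\<Prod>k<n'. \<bar>(real k + 1)*R - y\<bar>)"
    proof -
      have "\<forall>k\<in>{..<n'}. (real k + 1)*R - y \<noteq> 0"
      proof
        fix k assume "k \<in> {..<n'}"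
        show "(real k + 1)*R - y \<noteq> 0" using habs[of k] Rpos by auto
      qed
      thus ?thesis unfolding Pi_def by (subst prod_sign) (use negset in auto)
    qed
    have Piabs: "(\<Prod>k<n'. \<bar>(real k + 1)*R - y\<bar>) \<ge> (R/2)^n'"
    proof -
      have "(\<Prod>k<n'. R/2) \<le> (\<Prod>k<n'. \<bar>(real k + 1)*R - y\<bar>)"
        using habs Rpos by (intro prod_mono) auto
      thus ?thesis by simp
    qed
    define E where "E = (\<Prod>j\<in>{1..n}. real j - y)"
    have Eabs: "\<bar>E\<bar> \<le> y^n"
    proof -
      have "\<bar>E\<bar> = (\<Prod>j\<in>{1..n}. \<bar>real j - y\<bar>)" by (simp add: E_def abs_prod)
      also have "\<dots> \<le> (\<Prod>j\<in>{1..n}. y)"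
        using yn by (intro prod_mono) auto
      finally show ?thesis by simp
    qed
    have Pm: "poly P (- w m) = (-y) * Pi * (-y)^n + c * E" unfolding wm Pi_def E_def by (rule Pform)
    have sgn: "(-1)^m * ((-y) * Pi * (-y)^n) = y^(n+1) * (\<Prod>k<n'. \<bar>(real k + 1)*R - y\<bar>)"
    proof -
      have "(-y) * Pi * (-y)^n = (-1)^(n+1) * (-1)^(i-1) * y^(n+1) * (\<Prod>k<n'. \<bar>(real k + 1)*R - y\<bar>)"
        by (simp add: Pi power_minus[of y] algebra_simps)
      moreover have "(-1::real)^m * ((-1)^(n+1) * (-1)^(i-1)) = 1"
      proof -
        have "m + (n+1) + (i-1) = 2*m" using i1 False by (simp add: i_def)
        hence "(-1::real)^m * ((-1)^(n+1) * (-1)^(i-1)) = (-1)^(2*m)" by (metis power_add mult.assoc)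
        thus ?thesis by simp
      qed
      ultimately show ?thesis by (metis (no_types, lifting) mult.assoc mult_1)
    qed
    have big: "y * (R/2)^n' > c"
    proof -
      have "y * (R/2)^n' \<ge> (R/2) * (R/2)^n'" using yR Rpos by (intro mult_right_mono) auto
      also have "(R/2) * (R/2)^n' = (R/2)^n" by (simp add: n)
      also have "(R/2)^n = (4^n / 2^n) * \<alpha> * R^n'"
      proof -
        have e1: "(R/2)^n = R^n / 2^n" by (rule power_divide)
        have e2: "R^n = R * R^n'" using n by simp
        show ?thesis unfolding e1 e2 by (simp add: R_def)
      qed
      also have "(4::real)^n / 2^n = 2^n" by (simp add: power_divide[symmetric])
      finally have "y * (R/2)^n' \<ge> 2^n * \<alpha> * R^n'" .
      moreover have "(2::real)^n > 1" using n by (intro one_less_power) auto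
      moreover have "\<alpha> * R^n' > 0" using c0 by (simp add: c_def)
      ultimately show ?thesis unfolding c_def by (smt (verit) mult_less_cancel_right1 mult.assoc)
    qed
    have "y^(n+1) * (\<Prod>k<n'. \<bar>(real k + 1)*R - y\<bar>) \<ge> y^n * (y * (R/2)^n')"
      using Piabs yR Rpos by (simp add: algebra_simps mult_left_mono)
    moreover have "y^n * (y * (R/2)^n') > y^n * c" using big yR Rpos by simp
    moreover have "c * \<bar>E\<bar> \<le> c * y^n" using Eabs c0 by simp
    moreover have "(-1)^m * poly P (- w m) \<ge> y^(n+1) * (\<Prod>k<n'. \<bar>(real k + 1)*R - y\<bar>) - c * \<bar>E\<bar>"
    proof -
      have "(-1)^m * poly P (- w m) = y^(n+1) * (\<Prod>k<n'. \<bar>(real k + 1)*R - y\<bar>) + (-1)^m * (c * E)"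
        using sgn by (simp add: Pm algebra_simps)
      moreover have "(-1)^m * (c * E) \<ge> - (c * \<bar>E\<bar>)" using c0
        by (cases "even m") (auto simp: abs_if)
      ultimately show ?thesis by linarith
    qed
    ultimately show ?thesis by (simp add: algebra_simps)
  qed
have ivt: "\<exists>r. - w (Suc m) < r \<and> r < - w m \<and> poly P r = 0" if "m < 2*n" for m
  proof -
    have k1: "(-1)^m * poly P (- w m) > 0" using key that by simp
    have k2: "(-1)^(Suc m) * poly P (- w (Suc m)) > 0" by (rule key) (use that in simp)
    have "poly P (- w (Suc m)) * poly P (- w m) < 0"
    proof (cases "even m")
      case True
      thus ?thesis using k1 k2 by (simp add: mult_neg_pos)
    next
      case False
      thus ?thesis using k1 k2 by (simp add: mult_pos_neg)
    qed
    moreover have "- w (Suc m) < - w m" using wstrict[of m] by simp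
    ultimately show ?thesis using poly_IVT by blast
  qed
  obtain r where r: "\<And>m. m < 2*n \<Longrightarrow> - w (Suc m) < r m \<and> r m < - w m \<and> poly P (r m) = 0"
    using ivt by metis
  have lt: "r m' < r m" if "m < m'" "m' < 2*n" for m m'
  proof -
    have "r m' < - w m'" using r that by simp
    also have "\<dots> \<le> - w (Suc m)" using wmono[of "Suc m" m'] that by simp
    also have "\<dots> < r m" using r that by simp
    finally show ?thesis .
  qed
  have injr: "inj_on r {..<2*n}"
  proof (rule inj_onI)
    fix m m' assume "m \<in> {..<2*n}" "m' \<in> {..<2*n}" "r m = r m'"
    thus "m = m'" using lt[of m m'] lt[of m' m] by (metis lessThan_iff less_irrefl linorder_neqE_nat)
  qed
  have P0: "P \<noteq> 0" using dP n by auto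
  have rrP: "all_roots_real P"
    by (rule roots_real_card[OF P0, of "r ` {..<2*n}"])
       (use r injr dP in \<open>auto simp: card_image\<close>)
  have rra1: "all_roots_real a1"
  proof (rule roots_real_card[OF a10, of "insert 0 ((\<lambda>k. -((real k + 1)*R)) ` {..<n'})"])
    have "0 \<notin> (\<lambda>k. -((real k + 1)*R)) ` {..<n'}" using Rpos by auto
    moreover have "inj_on (\<lambda>k. -((real k + 1)*R)) {..<n'}" using Rpos by (auto simp: inj_on_def)
    ultimately show "degree a1 \<le> card (insert 0 ((\<lambda>k. -((real k + 1)*R)) ` {..<n'}))"
      using da1 n by (simp add: card_image)
    show "\<forall>x\<in>insert 0 ((\<lambda>k. -((real k + 1)*R)) ` {..<n'}). poly a1 x = 0"
      by (auto simp: pa1 prod_zero_iff)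
  qed auto
  have a20: "a2 \<noteq> 0" using da2 n by auto
  have rra2: "all_roots_real a2"
  proof (rule roots_real_card[OF a20, of "(\<lambda>i. - real i) ` {1..n}"])
    show "degree a2 \<le> card ((\<lambda>i. - real i) ` {1..n})"
      using da2 by (simp add: card_image inj_on_def)
    show "\<forall>x\<in>(\<lambda>i. - real i) ` {1..n}. poly a2 x = 0"
      by (auto simp: pa2 prod_zero_iff)
  qed auto
  have rrb: "all_roots_real b"
    unfolding all_roots_real_def b_def using n by (simp add: map_poly_monom poly_monom)
  have sep: "x < y" if "poly a2 x = 0 \<or> poly P x = 0" "poly b y = 0" for x y
  proof -
    have "y = 0" using that(2) by (simp add: pb)
    moreover have "x < 0"
    proof (rule ccontr)
      assume "\<not> x < 0"
      hence x: "x \<ge> 0" by simp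
      have "poly a2 x > 0" unfolding pa2 using x c0 by (intro mult_pos_pos prod_pos) auto
      thus False using posP[OF x] that(1) by auto
    qed
    ultimately show ?thesis by simp
  qed
  show ?thesis
    apply (rule exI[of _ a1], rule exI[of _ a2], rule exI[of _ b])
    using da1 da2 db rra1 rra2 rrb rrP sep unfolding P_def by blast
qed

end
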